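(* Consider a neutral evolutionary model on $N$ sites given by a replacement rule $p$ satisfying the fixation assumption described in the context, with replacement probabilities $e_{ij}$, birth rates $b_i$, death rates $d_i$, total birth rate $B>0$, site-specific fixation probabilities $\rho_i$, overall fixation probability $\rho=\frac{1}{B}\sum_{i=1}^N d_i\rho_i$ and molecular clock rate $K=Nu\rho$ (for a mutation probability $u>0$ per reproduction). Then $\rho_i=1/N$ for all $i=1,\ldots,N$ if and only if $b_i=d_i$ for all $i=1,\ldots,N$. In particular, if $b_i=d_i$ for all $i$, then $\rho=1/N$ and consequently $K=u$.
   Context: There are $N$ sites $1,\ldots,N$, each always occupied by one individual of type M (mutant) or R (resident); a state is $\mathbf{s}\in\{\mathrm{M},\mathrm{R}\}^N$. A replacement event is a pair $(R,\alpha)$ with $R\subseteq\{1,\ldots,N\}$ and $\alpha:R\to\{1,\ldots,N\}$. A replacement rule is a probability distribution $p(R,\alpha)$ on replacement events, independent of the state. The evolutionary Markov chain: at each time-step an event $(R,\alpha)$ is drawn with probability $p(R,\alpha)$ and the new state is $s_i'=s_i$ if $i\notin R$, $s_i'=s_{\alpha(i)}$ if $i\in R$. Fixation assumption: there exist a site $i$ and a finite sequence of replacement events, each of positive probability, such that if these events occur consecutively (from any initial state) every site ends up carrying the type initially at site $i$. Define $e_{ij}=\sum_{(R,\alpha):\, j\in R,\ \alpha(j)=i}p(R,\alpha)$, $b_i=\sum_j e_{ij}$, $d_i=\sum_j e_{ji}$, $B=\sum_{i,j}e_{ij}$. The site-specific fixation probability $\rho_i$ is the probability that the chain started from the state with M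 at site $i$ and R elsewhere is eventually absorbed in $(\mathrm{M},\ldots,\mathrm{M})$. *)

theory Defs
  imports "HOL-Probability.Probability"
begin

text \<open>Sites form a finite type 's (N = CARD('s)). A state assigns to each site its type:
  True = M (mutant), False = R (resident).
  A replacement event (R, alpha) is encoded as a partial map ea :: 's => 's option
  with R = dom ea and alpha(j) = the (ea j) for j in R.
  A replacement rule is a pmf over replacement events.\<close>

type_synonym 's state = "'s \<Rightarrow> bool"
type_synonym 's event = "'s \<Rightarrow> 's option"

definition apply_event :: "'s event \<Rightarrow> 's state \<Rightarrow> 's state" where
  "apply_event ea s = (\<lambda>i. case ea i of None \<Rightarrow> s i | Some j \<Rightarrow> s j)"

definition evo_step :: "'s event pmf \<Rightarrow> 's state \<Rightarrow> 's state pmf" where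
  "evo_step p s = map_pmf (\<lambda>ea. apply_event ea s) p"

primrec dist_n :: "'s event pmf \<Rightarrow> nat \<Rightarrow> 's state \<Rightarrow> 's state pmf" where
  "dist_n p 0 s = return_pmf s"
| "dist_n p (Suc n) s = bind_pmf (dist_n p n s) (evo_step p)"

definition fixation_assumption :: "'s event pmf \<Rightarrow> bool" where
  "fixation_assumption p \<longleftrightarrow>
     (\<exists>i eas. (\<forall>ea \<in> set eas. pmf p ea > 0) \<and>
        (\<forall>s :: 's state. \<forall>j. foldl (\<lambda>t ea. apply_event ea t) s eas j = s i))"

definition e_rate :: "'s event pmf \<Rightarrow> 's \<Rightarrow> 's \<Rightarrow> real" where
  "e_rate p i j = measure_pmf.prob p {ea. ea j = Some i}"

definition birth_rate :: "'s event pmf \<Rightarrow> 's \<Rightarrow> real" where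
  "birth_rate p i = (\<Sum>j\<in>UNIV. e_rate p i j)"

definition death_rate :: "'s event pmf \<Rightarrow> 's \<Rightarrow> real" where
  "death_rate p i = (\<Sum>j\<in>UNIV. e_rate p j i)"

definition total_birth :: "'s event pmf \<Rightarrow> real" where
  "total_birth p = (\<Sum>i\<in>UNIV. \<Sum>j\<in>UNIV. e_rate p i j)"

definition single_mutant :: "'s \<Rightarrow> 's state" where
  "single_mutant i = (\<lambda>j. j = i)"

text \<open>Site-specific fixation probability: probability of eventual absorption in the
  all-M state. Since all-M is absorbing, the events "absorbed by time n" increase
  to "eventually absorbed", so this is the supremum over n of the probability of
  being in all-M at time n.\<close>
definition fix_prob :: "'s event pmf \<Rightarrow> 's \<Rightarrow> real" where
  "fix_prob p i = (SUP n. pmf (dist_n p n (single_mutant i)) (\<lambda>_. True))"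

definition overall_fix_prob :: "'s event pmf \<Rightarrow> real" where
  "overall_fix_prob p = (1 / total_birth p) * (\<Sum>i\<in>UNIV. death_rate p i * fix_prob p i)"

definition clock_rate :: "'s event pmf \<Rightarrow> real \<Rightarrow> real" where
  "clock_rate p u = real CARD('s) * u * overall_fix_prob (p :: 's event pmf)"

end

theory Submission imports Defs begin

lemma prob_fin:
  fixes A :: "'a::finite pmf"
  shows "measure_pmf.prob A S = (\<Sum>x\<in>UNIV. pmf A x * of_bool (x \<in> S))"
  by (simp add: measure_measure_pmf_finite sum.If_cases Int_absorb1)

lemma pmf_bind_fin:
  fixes A :: "'a::finite pmf"
  shows "pmf (bind_pmf A f) x = (\<Sum>y\<in>UNIV. pmf A y * pmf (f y) x)"
  by (simp add: pmf_bind integral_measure_pmf[of UNIV] mult.commute)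

lemma prob_bind_fin:
  fixes A :: "'a::finite pmf" and f :: "'a \<Rightarrow> 'b::finite pmf"
  shows "measure_pmf.prob (bind_pmf A f) S = (\<Sum>y\<in>UNIV. pmf A y * measure_pmf.prob (f y) S)"
proof -
  have "measure_pmf.prob (bind_pmf A f) S = (\<Sum>x\<in>UNIV. (\<Sum>y\<in>UNIV. pmf A y * pmf (f y) x) * of_bool (x \<in> S))"
    by (simp only: prob_fin pmf_bind_fin)
  also have "\<dots> = (\<Sum>x\<in>UNIV. \<Sum>y\<in>UNIV. pmf A y * (pmf (f y) x * of_bool (x \<in> S)))"
    by (simp only: sum_distrib_right mult.assoc)
  also have "\<dots> = (\<Sum>y\<in>UNIV. \<Sum>x\<in>UNIV. pmf A y * (pmf (f y) x * of_bool (x \<in> S)))"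
    by (rule sum.swap)
  also have "\<dots> = (\<Sum>y\<in>UNIV. pmf A y * measure_pmf.prob (f y) S)"
    by (simp only: sum_distrib_left[symmetric] prob_fin)
  finally show ?thesis .
qed

definition sig :: "'s event \<Rightarrow> 's \<Rightarrow> 's" where
  "sig ea k = (case ea k of None \<Rightarrow> k | Some j \<Rightarrow> j)"

lemma apply_event_sig: "apply_event ea s = s \<circ> sig ea"
  by (auto simp: apply_event_def sig_def fun_eq_iff split: option.splits)

primrec phi :: "'s event pmf \<Rightarrow> nat \<Rightarrow> ('s \<Rightarrow> 's) pmf" where
  "phi p 0 = return_pmf id"
| "phi p (Suc n) = bind_pmf (phi p n) (\<lambda>F. map_pmf (\<lambda>ea. F \<circ> sig ea) p)"

lemma dist_phi: "dist_n p n s = map_pmf (\<lambda>F. s \<circ> F) (phi p n)"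
  by (induction n) (simp_all add: evo_step_def bind_map_pmf map_bind_pmf pmf.map_comp o_def
       apply_event_sig)

lemma phi_add: "phi p (n + m) = bind_pmf (phi p n) (\<lambda>F. map_pmf (\<lambda>G. F \<circ> G) (phi p m))"
proof (induction m)
  case 0
  then show ?case by (simp add: bind_return_pmf')
next
  case (Suc m)
  then show ?case
    by (simp add: bind_assoc_pmf bind_map_pmf map_bind_pmf pmf.map_comp o_def)
qed

lemma foldl_apply:
  "foldl (\<lambda>t ea. apply_event ea t) (s \<circ> F) eas = s \<circ> foldl (\<lambda>F ea. F \<circ> sig ea) F eas"
  by (induction eas arbitrary: F) (simp_all add: apply_event_sig comp_assoc)

lemma prob_map_fin:
  fixes A :: "'a::finite pmf"
  shows "measure_pmf.prob (map_pmf g A) S = (\<Sum>x\<in>UNIV. pmf A x * of_bool (g x \<in> S))"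
  by (simp add: prob_fin)

lemma step_mono:
  fixes p :: "('s::finite) event pmf"
  assumes "\<And>F ea. F \<in> S \<Longrightarrow> F \<circ> sig ea \<in> S"
  shows "measure_pmf.prob (phi p n) S \<le> measure_pmf.prob (phi p (Suc n)) S"
proof -
  have "measure_pmf.prob (phi p n) S = (\<Sum>F\<in>UNIV. pmf (phi p n) F * of_bool (F \<in> S))"
    by (rule prob_fin)
  also have "\<dots> \<le> (\<Sum>F\<in>UNIV. pmf (phi p n) F * measure_pmf.prob (map_pmf (\<lambda>ea. F \<circ> sig ea) p) S)"
  proof (rule sum_mono)
    fix F
    show "pmf (phi p n) F * of_bool (F \<in> S) \<le> pmf (phi p n) F * measure_pmf.prob (map_pmf (\<lambda>ea. F \<circ> sig ea) p) S"
    proof (cases "F \<in> S")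
      case True
      then have "(\<lambda>ea. F \<circ> sig ea) -` S = UNIV" using assms by auto
      then show ?thesis using True by simp
    qed simp
  qed
  also have "\<dots> = measure_pmf.prob (phi p (Suc n)) S"
    by (simp add: prob_bind_fin)
  finally show ?thesis .
qed

lemma step_antimono:
  fixes p :: "('s::finite) event pmf"
  assumes "\<And>F ea. F \<circ> sig ea \<in> S \<Longrightarrow> F \<in> S"
  shows "measure_pmf.prob (phi p (Suc n)) S \<le> measure_pmf.prob (phi p n) S"
proof -
  have "measure_pmf.prob (phi p (Suc n)) S = (\<Sum>F\<in>UNIV. pmf (phi p n) F * measure_pmf.prob (map_pmf (\<lambda>ea. F \<circ> sig ea) p) S)"
    by (simp add: prob_bind_fin)
  also have "\<dots> \<le> (\<Sum>F\<in>UNIV. pmf (phi p n) F * of_bool (F \<in> S))"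
  proof (rule sum_mono)
    fix F
    show "pmf (phi p n) F * measure_pmf.prob (map_pmf (\<lambda>ea. F \<circ> sig ea) p) S \<le> pmf (phi p n) F * of_bool (F \<in> S)"
    proof (cases "F \<in> S")
      case False
      then have "(\<lambda>ea. F \<circ> sig ea) -` S = {}" using assms by auto
      then show ?thesis using False by simp
    qed (simp add: mult_left_le)
  qed
  also have "\<dots> = measure_pmf.prob (phi p n) S"
    by (rule prob_fin[symmetric])
  finally show ?thesis .
qed

definition NC :: "('s \<Rightarrow> 's) set" where "NC = {F. \<not> (\<exists>i. \<forall>j. F j = i)}"
definition CI :: "'s \<Rightarrow> ('s \<Rightarrow> 's) set" where "CI i = {F. \<forall>j. F j = i}"

lemma NC_step: "F \<circ> G \<in> NC \<Longrightarrow> F \<in> NC \<and> G \<in> NC"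
  by (auto simp: NC_def) (metis comp_apply)+

lemma c_mult:
  fixes p :: "('s::finite) event pmf"
  shows "measure_pmf.prob (phi p (n + m)) NC \<le> measure_pmf.prob (phi p n) NC * measure_pmf.prob (phi p m) NC"
proof -
  let ?c = "measure_pmf.prob (phi p m) NC"
  have "measure_pmf.prob (phi p (n+m)) NC = (\<Sum>F\<in>UNIV. pmf (phi p n) F * measure_pmf.prob (map_pmf (\<lambda>G. F \<circ> G) (phi p m)) NC)"
    by (simp add: phi_add prob_bind_fin)
  also have "\<dots> \<le> (\<Sum>F\<in>UNIV. pmf (phi p n) F * of_bool (F \<in> NC) * ?c)"
  proof (rule sum_mono)
    fix F
    show "pmf (phi p n) F * measure_pmf.prob (map_pmf (\<lambda>G. F \<circ> G) (phi p m)) NC \<le> pmf (phi p n) F * of_bool (F \<in> NC) * ?c"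
    proof (cases "F \<in> NC")
      case False
      then have "(\<lambda>G. F \<circ> G) -` NC = {}" using NC_step by blast
      then show ?thesis using False by simp
    next
      case True
      have "(\<lambda>G. F \<circ> G) -` NC \<subseteq> NC" using NC_step by blast
      then have "measure_pmf.prob (phi p m) ((\<lambda>G. F \<circ> G) -` NC) \<le> ?c"
        by (rule measure_pmf.finite_measure_mono) simp
      then show ?thesis using True by (simp add: mult_left_mono)
    qed
  qed
  also have "\<dots> = measure_pmf.prob (phi p n) NC * ?c"
    by (simp only: prob_fin[of "phi p n" NC] sum_distrib_right)
  finally show ?thesis .
qed

lemma pmf_map_ge: "pmf (map_pmf g A) (g x) \<ge> pmf A x"
proof -
  have "pmf A x = measure_pmf.prob A {x}" by (simp add: measure_pmf_single)
  also have "\<dots> \<le> measure_pmf.prob A (g -` {g x})"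
    by (rule measure_pmf.finite_measure_mono) auto
  finally show ?thesis by (simp add: pmf_map)
qed

lemma phi_fold_ge:
  fixes p :: "('s::finite) event pmf"
  shows "pmf (phi p (length eas)) (foldl (\<lambda>F ea. F \<circ> sig ea) id eas) \<ge> prod_list (map (pmf p) eas)"
proof (induction eas rule: rev_induct)
  case Nil
  then show ?case by (simp add: indicator_def id_def)
next
  case (snoc e eas)
  let ?F = "foldl (\<lambda>F ea. F \<circ> sig ea) id eas"
  have "prod_list (map (pmf p) (eas @ [e])) = prod_list (map (pmf p) eas) * pmf p e" by simp
  also have "\<dots> \<le> pmf (phi p (length eas)) ?F * pmf (map_pmf (\<lambda>ea. ?F \<circ> sig ea) p) (?F \<circ> sig e)"
    by (rule mult_mono[OF snoc.IH]) (rule pmf_map_ge[of p e "\<lambda>ea. ?F \<circ> sig ea"], rule pmf_nonneg, rule pmf_nonneg)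
  also have "\<dots> \<le> (\<Sum>G\<in>UNIV. pmf (phi p (length eas)) G * pmf (map_pmf (\<lambda>ea. G \<circ> sig ea) p) (?F \<circ> sig e))"
    by (rule member_le_sum[where f = "\<lambda>G. pmf (phi p (length eas)) G * pmf (map_pmf (\<lambda>ea. G \<circ> sig ea) p) (?F \<circ> sig e)"]) auto
  also have "\<dots> = pmf (phi p (length (eas @ [e]))) (foldl (\<lambda>F ea. F \<circ> sig ea) id (eas @ [e]))"
    by (simp add: pmf_bind_fin)
  finally show ?case .
qed

lemma prod_list_pos: "(\<forall>x\<in>set xs. (f x::real) > 0) \<Longrightarrow> prod_list (map f xs) > 0"
  by (induction xs) auto

lemma c_to_0:
  fixes p :: "('s::finite) event pmf"
  assumes fixa: "fixation_assumption p"
  shows "(\<lambda>n. measure_pmf.prob (phi p n) NC) \<longlonglongrightarrow> 0"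
proof -
  let ?c = "\<lambda>n. measure_pmf.prob (phi p n) NC"
  obtain i eas where H: "(\<forall>ea \<in> set eas. pmf p ea > 0) \<and>
      (\<forall>s :: 's state. \<forall>j. foldl (\<lambda>t ea. apply_event ea t) s eas j = s i)"
    using fixa unfolding fixation_assumption_def by (elim exE) (rule that)
  have pos: "\<forall>ea \<in> set eas. pmf p ea > 0" using H by (rule conjunct1)
  have fx: "\<forall>s :: 's state. \<forall>j. foldl (\<lambda>t ea. apply_event ea t) s eas j = s i" using H by (rule conjunct2)
  let ?F = "foldl (\<lambda>F ea. F \<circ> sig ea) id eas"
  let ?L = "length eas"
  define \<delta> where "\<delta> = prod_list (map (pmf p) eas)"
  have dpos: "\<delta> > 0" unfolding \<delta>_def using pos by (intro prod_list_pos) auto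
  have Fc: "?F \<notin> NC"
  proof -
    have "\<forall>j. ?F j = i"
    proof
      fix j
      have "foldl (\<lambda>t ea. apply_event ea t) ((\<lambda>k. k = i) \<circ> id) eas j = ((\<lambda>k. k = i) \<circ> id) i"
        by (rule fx[rule_format])
      then show "?F j = i" by (simp only: foldl_apply) simp
    qed
    then show ?thesis by (auto simp: NC_def)
  qed
  have "?c ?L + pmf (phi p ?L) ?F = measure_pmf.prob (phi p ?L) (NC \<union> {?F})"
    using Fc by (subst measure_pmf.finite_measure_Union) (auto simp: measure_pmf_single)
  also have "\<dots> \<le> 1" by simp
  finally have cL: "?c ?L \<le> 1 - \<delta>" using phi_fold_ge[of p eas] unfolding \<delta>_def by linarith
  have c0: "\<And>n. ?c n \<ge> 0" by simp
  have dle: "0 \<le> 1 - \<delta>" using cL c0[of ?L] by linarith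
  have cpow: "\<And>m. ?c (m * ?L) \<le> (1 - \<delta>) ^ m"
  proof -
    fix m show "?c (m * ?L) \<le> (1 - \<delta>) ^ m"
    proof (induction m)
      case 0
      show ?case by simp
    next
      case (Suc m)
      have "?c (Suc m * ?L) = ?c (m * ?L + ?L)" by (simp add: add.commute)
      also have "\<dots> \<le> ?c (m * ?L) * ?c ?L" by (rule c_mult)
      also have "\<dots> \<le> (1 - \<delta>) ^ m * (1 - \<delta>)"
        by (rule mult_mono) (use Suc cL c0 dle in auto)
      finally show ?case by (simp add: mult.commute)
    qed
  qed
  have "\<And>k. ?c (Suc k) \<le> ?c k"
    by (rule step_antimono) (use NC_step in blast)
  then have "decseq ?c" by (rule decseq_SucI)
  then obtain l where l: "?c \<longlonglongrightarrow> l" "\<forall>n. l \<le> ?c n"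
    using decseq_convergent[of ?c 0] c0 by blast
  have "(\<lambda>m. (1 - \<delta>) ^ m) \<longlonglongrightarrow> 0"
    by (rule LIMSEQ_power_zero) (use dpos dle in auto)
  have lm: "\<And>m. l \<le> (1 - \<delta>) ^ m"
  proof -
    fix m
    show "l \<le> (1 - \<delta>) ^ m" using l(2)[rule_format, of "m * ?L"] cpow[of m] by linarith
  qed
  have "l \<le> 0"
    by (rule LIMSEQ_le_const[OF \<open>(\<lambda>m. (1 - \<delta>) ^ m) \<longlonglongrightarrow> 0\<close>]) (use lm in blast)
  moreover have "0 \<le> l" by (rule LIMSEQ_le_const[OF l(1)]) (use c0 in auto)
  ultimately show ?thesis using l(1) by simp
qed

definition M :: "'s event pmf \<Rightarrow> 's \<Rightarrow> 's \<Rightarrow> real" where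
  "M p k m = measure_pmf.prob p {ea. sig ea k = m}"

primrec Mpow :: "('s::finite) event pmf \<Rightarrow> nat \<Rightarrow> 's \<Rightarrow> 's \<Rightarrow> real" where
  "Mpow p 0 k i = of_bool (k = i)"
| "Mpow p (Suc n) k i = (\<Sum>m\<in>UNIV. M p k m * Mpow p n m i)"

lemma sum_of_bool_eq: "(\<Sum>m\<in>(UNIV::'a::finite set). of_bool (g = m) * (h m :: real)) = h g"
proof -
  have "(\<Sum>m\<in>(UNIV::'a set). of_bool (g = m) * (h m :: real)) = (\<Sum>m\<in>UNIV. if g = m then h m else 0)"
    by (rule sum.cong) auto
  then show ?thesis by simp
qed

lemma sum_of_bool_eq': "(\<Sum>m\<in>(UNIV::'a::finite set). of_bool (m = g) * (h m :: real)) = h g"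
proof -
  have "(\<Sum>m\<in>(UNIV::'a set). of_bool (m = g) * (h m :: real)) = (\<Sum>m\<in>UNIV. if g = m then h m else 0)"
    by (rule sum.cong) auto
  then show ?thesis by simp
qed

lemma prob_comp_split:
  fixes A :: "'a::finite pmf" and g :: "'a \<Rightarrow> 'b::finite"
  shows "measure_pmf.prob A {x. F (g x) = i} = (\<Sum>m\<in>UNIV. measure_pmf.prob A {x. g x = m} * of_bool (F m = i))"
proof -
  have "(\<Sum>m\<in>UNIV. measure_pmf.prob A {x. g x = m} * of_bool (F m = i))
     = (\<Sum>m\<in>UNIV. \<Sum>x\<in>UNIV. pmf A x * (of_bool (g x = m) * of_bool (F m = i)))"
    by (simp only: prob_fin[of A] sum_distrib_right mult.assoc mem_Collect_eq)
  also have "\<dots> = (\<Sum>x\<in>UNIV. \<Sum>m\<in>UNIV. pmf A x * (of_bool (g x = m) * of_bool (F m = i)))"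
    by (rule sum.swap)
  also have "\<dots> = (\<Sum>x\<in>UNIV. pmf A x * (\<Sum>m\<in>UNIV. of_bool (g x = m) * of_bool (F m = i)))"
    by (simp only: sum_distrib_left)
  also have "\<dots> = (\<Sum>x\<in>UNIV. pmf A x * of_bool (F (g x) = i))"
    by (simp only: sum_of_bool_eq)
  also have "\<dots> = measure_pmf.prob A {x. F (g x) = i}"
    by (simp add: prob_fin[of A])
  finally show ?thesis ..
qed

lemma q_Mpow:
  fixes p :: "('s::finite) event pmf"
  shows "measure_pmf.prob (phi p n) {F. F k = i} = Mpow p n k i"
proof (induction n arbitrary: k)
  case 0
  then show ?case by (simp add: measure_return indicator_def)
next
  case (Suc n)
  have "measure_pmf.prob (phi p (Suc n)) {F. F k = i}
     = (\<Sum>F\<in>UNIV. pmf (phi p n) F * measure_pmf.prob p {ea. F (sig ea k) = i})"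
    by (simp add: prob_bind_fin vimage_def)
  also have "\<dots> = (\<Sum>F\<in>UNIV. pmf (phi p n) F * (\<Sum>m\<in>UNIV. M p k m * of_bool (F m = i)))"
    by (simp only: prob_comp_split[where g="\<lambda>ea. sig ea k"] M_def)
  also have "\<dots> = (\<Sum>F\<in>UNIV. \<Sum>m\<in>UNIV. pmf (phi p n) F * (M p k m * of_bool (F m = i)))"
    by (simp only: sum_distrib_left)
  also have "\<dots> = (\<Sum>m\<in>UNIV. \<Sum>F\<in>UNIV. pmf (phi p n) F * (M p k m * of_bool (F m = i)))"
    by (rule sum.swap)
  also have "\<dots> = (\<Sum>m\<in>UNIV. M p k m * (\<Sum>F\<in>UNIV. pmf (phi p n) F * of_bool (F m = i)))"
    by (simp only: sum_distrib_left mult.left_commute)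
  also have "\<dots> = Mpow p (Suc n) k i"
    by (simp only: Mpow.simps Suc.IH[symmetric] prob_fin mem_Collect_eq)
  finally show ?case .
qed

lemma Mpow_back: "Mpow p (Suc n) k i = (\<Sum>m\<in>UNIV. Mpow p n k m * M p m i)"
proof (induction n arbitrary: k)
  case 0
  have "(\<Sum>m\<in>UNIV. M p k m * of_bool (m = i)) = (\<Sum>m\<in>UNIV. of_bool (m = i) * M p k m)"
    by (simp only: mult.commute)
  then show ?case by (simp only: Mpow.simps sum_of_bool_eq sum_of_bool_eq')
next
  case (Suc n)
  have "Mpow p (Suc (Suc n)) k i = (\<Sum>m\<in>UNIV. M p k m * (\<Sum>l\<in>UNIV. Mpow p n m l * M p l i))"
    using Suc by simp
  also have "\<dots> = (\<Sum>m\<in>UNIV. \<Sum>l\<in>UNIV. M p k m * (Mpow p n m l * M p l i))"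
    by (simp only: sum_distrib_left)
  also have "\<dots> = (\<Sum>l\<in>UNIV. \<Sum>m\<in>UNIV. M p k m * (Mpow p n m l * M p l i))"
    by (rule sum.swap)
  also have "\<dots> = (\<Sum>l\<in>UNIV. (\<Sum>m\<in>UNIV. M p k m * Mpow p n m l) * M p l i)"
    by (simp only: sum_distrib_right mult.assoc)
  also have "\<dots> = (\<Sum>l\<in>UNIV. Mpow p (Suc n) k l * M p l i)" by simp
  finally show ?case .
qed

lemma death_none:
  fixes p :: "('s::finite) event pmf"
  shows "death_rate p m = 1 - measure_pmf.prob p {ea. ea m = None}"
proof -
  have "death_rate p m = (\<Sum>j\<in>UNIV. \<Sum>ea\<in>UNIV. pmf p ea * of_bool (ea m = Some j))"
    by (simp add: death_rate_def e_rate_def prob_fin[of p])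
  also have "\<dots> = (\<Sum>ea\<in>UNIV. \<Sum>j\<in>UNIV. pmf p ea * of_bool (ea m = Some j))"
    by (rule sum.swap)
  also have "\<dots> = (\<Sum>ea\<in>UNIV. pmf p ea * (\<Sum>j\<in>UNIV. of_bool (ea m = Some j)))"
    by (simp only: sum_distrib_left)
  also have "\<dots> = (\<Sum>ea\<in>UNIV. pmf p ea * (1 - of_bool (ea m = None)))"
    by (rule sum.cong) (auto split: option.splits simp: of_bool_def sum.delta)
  also have "\<dots> = (\<Sum>ea\<in>UNIV. pmf p ea) - measure_pmf.prob p {ea. ea m = None}"
    by (simp add: prob_fin[of p] right_diff_distrib sum_subtractf)
  also have "(\<Sum>ea\<in>UNIV. pmf p ea) = 1" by (rule sum_pmf_eq_1) auto
  finally show ?thesis .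
qed

lemma M_col:
  fixes p :: "('s::finite) event pmf"
  shows "(\<Sum>k\<in>UNIV. M p k m) = 1 + birth_rate p m - death_rate p m"
proof -
  have "\<And>k. M p k m = e_rate p m k + of_bool (k = m) * measure_pmf.prob p {ea. ea k = None}"
  proof -
    fix k
    have "M p k m = (\<Sum>ea\<in>UNIV. pmf p ea * (of_bool (ea k = Some m) + of_bool (k = m) * of_bool (ea k = None)))"
      unfolding M_def prob_fin[of p]
      by (rule sum.cong) (auto simp: sig_def split: option.splits)
    also have "\<dots> = e_rate p m k + of_bool (k = m) * measure_pmf.prob p {ea. ea k = None}"
      by (simp add: e_rate_def prob_fin[of p] distrib_left sum.distrib sum_distrib_left mult.left_commute)
    finally show "M p k m = e_rate p m k + of_bool (k = m) * measure_pmf.prob p {ea. ea k = None}" .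
  qed
  then have "(\<Sum>k\<in>UNIV. M p k m) = birth_rate p m + measure_pmf.prob p {ea. ea m = None}"
    by (simp only: sum.distrib birth_rate_def sum_of_bool_eq')
  then show ?thesis using death_none[of p m] by simp
qed

lemma fix_prob_SUP:
  fixes p :: "('s::finite) event pmf"
  shows "fix_prob p i = (SUP n. measure_pmf.prob (phi p n) (CI i))"
proof -
  have "\<And>n. pmf (dist_n p n (single_mutant i)) (\<lambda>_. True) = measure_pmf.prob (phi p n) (CI i)"
  proof -
    fix n
    have "(\<lambda>F. single_mutant i \<circ> F) -` {\<lambda>_. True} = CI i"
      by (auto simp: CI_def single_mutant_def fun_eq_iff)
    then show "pmf (dist_n p n (single_mutant i)) (\<lambda>_. True) = measure_pmf.prob (phi p n) (CI i)"
      by (simp add: dist_phi pmf_map)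
  qed
  then show ?thesis by (simp add: fix_prob_def)
qed

lemma a_lim:
  fixes p :: "('s::finite) event pmf"
  shows "(\<lambda>n. measure_pmf.prob (phi p n) (CI i)) \<longlonglongrightarrow> fix_prob p i"
  unfolding fix_prob_SUP
proof (rule LIMSEQ_incseq_SUP)
  show "bdd_above (range (\<lambda>n. measure_pmf.prob (phi p n) (CI i)))"
    by (rule bdd_aboveI[of _ 1]) auto
  have "\<And>n. measure_pmf.prob (phi p n) (CI i) \<le> measure_pmf.prob (phi p (Suc n)) (CI i)"
    by (rule step_mono) (auto simp: CI_def)
  then show "incseq (\<lambda>n. measure_pmf.prob (phi p n) (CI i))" by (rule incseq_SucI)
qed

lemma Mpow_lim:
  fixes p :: "('s::finite) event pmf"
  assumes fixa: "fixation_assumption p"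
  shows "(\<lambda>n. Mpow p n k i) \<longlonglongrightarrow> fix_prob p i"
proof (rule tendsto_sandwich)
  let ?a = "\<lambda>n. measure_pmf.prob (phi p n) (CI i)"
  let ?c = "\<lambda>n. measure_pmf.prob (phi p n) NC"
  show "\<forall>\<^sub>F n in sequentially. ?a n \<le> Mpow p n k i"
  proof (rule always_eventually, rule allI)
    fix n
    have "?a n \<le> measure_pmf.prob (phi p n) {F. F k = i}"
      by (rule measure_pmf.finite_measure_mono) (auto simp: CI_def)
    then show "?a n \<le> Mpow p n k i" by (simp add: q_Mpow)
  qed
  show "\<forall>\<^sub>F n in sequentially. Mpow p n k i \<le> ?a n + ?c n"
  proof (rule always_eventually, rule allI)
    fix n
    have "measure_pmf.prob (phi p n) {F. F k = i} \<le> measure_pmf.prob (phi p n) (CI i \<union> NC)"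
      by (rule measure_pmf.finite_measure_mono) (auto simp: CI_def NC_def)
    also have "\<dots> \<le> ?a n + ?c n" by (rule measure_subadditive) (auto simp: measure_pmf.emeasure_eq_measure)
    finally show "Mpow p n k i \<le> ?a n + ?c n" by (simp add: q_Mpow)
  qed
  show "?a \<longlonglongrightarrow> fix_prob p i" by (rule a_lim)
  show "(\<lambda>n. ?a n + ?c n) \<longlonglongrightarrow> fix_prob p i"
    using tendsto_add[OF a_lim c_to_0[OF fixa]] by simp
qed

theorem mainTheorem2:
  fixes p :: "('s::finite) event pmf" and u :: real
  assumes fixa: "fixation_assumption p"
    and Bpos: "total_birth p > 0"
    and upos: "u > 0"
  shows "((\<forall>i. fix_prob p i = 1 / real CARD('s)) \<longleftrightarrow> (\<forall>i. birth_rate p i = death_rate p i))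
         \<and> ((\<forall>i. birth_rate p i = death_rate p i) \<longrightarrow>
              overall_fix_prob p = 1 / real CARD('s) \<and> clock_rate p u = u)"
proof -
  let ?N = "real CARD('s)"
  have Npos: "?N > 0" by simp
  have fwd: "\<forall>i. birth_rate p i = death_rate p i" if H: "\<forall>i. fix_prob p i = 1 / ?N"
  proof
    fix i
    obtain k :: 's where True by blast
    have L1: "(\<lambda>n. Mpow p (Suc n) k i) \<longlonglongrightarrow> fix_prob p i"
      using Mpow_lim[OF fixa, of k i] by (rule LIMSEQ_Suc)
    have L2: "(\<lambda>n. Mpow p (Suc n) k i) \<longlonglongrightarrow> (\<Sum>m\<in>UNIV. fix_prob p m * M p m i)"
      unfolding Mpow_back
      by (intro tendsto_sum tendsto_mult Mpow_lim[OF fixa] tendsto_const)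
    have "fix_prob p i = (\<Sum>m\<in>UNIV. fix_prob p m * M p m i)"
      using LIMSEQ_unique[OF L1 L2] .
    also have "\<dots> = (\<Sum>m\<in>UNIV. (1 / ?N) * M p m i)"
      using H by simp
    also have "\<dots> = (1 / ?N) * (\<Sum>m\<in>UNIV. M p m i)"
      by (simp only: sum_distrib_left)
    also have "\<dots> = (1 / ?N) * (1 + birth_rate p i - death_rate p i)"
      by (simp only: M_col)
    finally have "1 / ?N = (1 / ?N) * (1 + birth_rate p i - death_rate p i)"
      using H by simp
    then show "birth_rate p i = death_rate p i" using Npos by (simp add: field_simps)
  qed
  have bwd: "\<forall>i. fix_prob p i = 1 / ?N" if H: "\<forall>i. birth_rate p i = death_rate p i"
  proof
    fix i
    have col: "(\<Sum>k\<in>UNIV. M p k m) = 1" for m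
      using M_col[of p m] H by simp
    have S1: "\<And>n. (\<Sum>k\<in>UNIV. Mpow p n k i) = 1"
    proof -
      fix n show "(\<Sum>k\<in>UNIV. Mpow p n k i) = 1"
      proof (induction n)
        case 0
        then show ?case by (simp add: of_bool_def)
      next
        case (Suc n)
        have "(\<Sum>k\<in>UNIV. Mpow p (Suc n) k i) = (\<Sum>m\<in>UNIV. (\<Sum>k\<in>UNIV. M p k m) * Mpow p n m i)"
          by (simp only: Mpow.simps sum_distrib_right) (rule sum.swap)
        also have "\<dots> = 1" using Suc col by simp
        finally show ?case .
      qed
    qed
    have "(\<lambda>n. \<Sum>k\<in>UNIV. Mpow p n k i) \<longlonglongrightarrow> (\<Sum>k\<in>(UNIV::'s set). fix_prob p i)"
      by (intro tendsto_sum Mpow_lim[OF fixa])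
    then have "(\<lambda>n. 1::real) \<longlonglongrightarrow> ?N * fix_prob p i" using S1 by simp
    then have "?N * fix_prob p i = 1" using LIMSEQ_unique LIMSEQ_const_iff by blast
    then show "fix_prob p i = 1 / ?N" using Npos by (simp add: field_simps)
  qed
  have over: "overall_fix_prob p = 1 / ?N \<and> clock_rate p u = u"
    if H: "\<forall>i. birth_rate p i = death_rate p i"
  proof -
    have fp: "\<And>i. fix_prob p i = 1 / ?N" using bwd H by blast
    have "(\<Sum>i\<in>UNIV. death_rate p i) = total_birth p"
      unfolding death_rate_def total_birth_def by (rule sum.swap)
    then have o: "overall_fix_prob p = 1 / ?N"
    proof -
      have "overall_fix_prob p = (1 / total_birth p) * ((\<Sum>i\<in>UNIV. death_rate p i) * (1 / ?N))"
        by (simp only: overall_fix_prob_def fp sum_distrib_right)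
      then show ?thesis using Bpos \<open>(\<Sum>i\<in>UNIV. death_rate p i) = total_birth p\<close> by simp
    qed
    then show ?thesis using Npos by (simp add: clock_rate_def)
  qed
  show ?thesis using fwd bwd over by blast
qed

end
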